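(* In base $B=3$, for every integer $\eta>2$, $$\gamma_3(\eta)=4\left(\frac{3^{-1/2}}{2}\,3\uparrow\uparrow(\eta-2)\right)^{7/2}-1,$$ i.e. with $E_1=\frac{3^{-1/2}}{2}\,3^{7/2}$ and $E_{m+1}=\frac{3^{-1/2}}{2}\,3^{E_m}$ for $m\ge1$, one has $\gamma_3(\eta)=4E_{\eta-2}-1$.
   Context: Every integer $x>0$ is written uniquely in base $3$ as $x=\sum_{i} x_i 3^i$ with digits $x_i\in\{0,1,2\}$. Define $\mathcal{H}_3(x)=\sum_{i} x_i^2$, $\mathcal{H}_3^0(x)=x$, $\mathcal{H}_3^n=\mathcal{H}_3\circ\mathcal{H}_3^{n-1}$. A positive integer $x$ is happy if $\mathcal{H}_3^n(x)=1$ for some $n\in\mathbb{N}$; its height is $\eta_3(x)=\min\{\alpha\in\mathbb{N}:\mathcal{H}_3^\alpha(x)=1\}$. For $n\in\mathbb{N}$, $\gamma_3(n)$ denotes the smallest happy number $x\ge1$ with $\eta_3(x)=n$. Adapted up-arrow notation: for reals $k,x,y,z$ and integer $n\ge1$, $k(xy\uparrow\uparrow n)^z=k\,E_n$ where $E_1=x\,y^{z}$ and $E_{m+1}=x\,y^{E_m}$ (the factor "$xy$" is repeated $n$ times in the tower $k\,x y^{x y^{\cdot^{\cdot^{x y^{z}}}}}$); here $k=4$, $x=\frac{3^{-1/2}}{2}$, $y=3$, $z=\frac72$. *)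

theory Defs
  imports Complex_Main
begin

fun H3 :: "nat \<Rightarrow> nat" where
  "H3 x = (if x = 0 then 0 else (x mod 3)^2 + H3 (x div 3))"

definition happy3 :: "nat \<Rightarrow> bool" where
  "happy3 x \<longleftrightarrow> x > 0 \<and> (\<exists>n. (H3 ^^ n) x = 1)"

definition eta3 :: "nat \<Rightarrow> nat" where
  "eta3 x = (LEAST a. (H3 ^^ a) x = 1)"

definition gamma3 :: "nat \<Rightarrow> nat" where
  "gamma3 n = (LEAST x. x \<ge> 1 \<and> happy3 x \<and> eta3 x = n)"

fun tower3 :: "nat \<Rightarrow> real" where
  "tower3 0 = 7/2"
| "tower3 (Suc m) = (3 powr (-1/2) / 2) * 3 powr (tower3 m)"

end

theory Submission
  imports Defs
begin

declare H3.simps[simp del]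

lemma H3_0[simp]: "H3 0 = 0" by (simp add: H3.simps)

lemma H3_digit: "r < 3 \<Longrightarrow> H3 (3*q + r) = r^2 + H3 q"
proof (cases "3*q + r = 0")
  case True then show ?thesis by simp
next
  case False
  assume r: "r < 3"
  have "(3*q+r) mod 3 = r" "(3*q+r) div 3 = q" using r by auto
  then show ?thesis using False by (subst H3.simps) simp
qed

lemma H3_zero: "H3 x = 0 \<Longrightarrow> x = 0"
proof (induction x rule: H3.induct)
  case (1 x)
  show ?case
  proof (rule ccontr)
    assume "x \<noteq> 0"
    then have "H3 x = (x mod 3)^2 + H3 (x div 3)" by (subst H3.simps) simp
    with 1 have "x mod 3 = 0" "H3 (x div 3) = 0" by auto
    with 1 \<open>x \<noteq> 0\<close> have "x div 3 = 0" by auto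
    with \<open>x mod 3 = 0\<close> \<open>x \<noteq> 0\<close> show False by presburger
  qed
qed

lemma H3_rep: "H3 (2*3^a - 1) = 4*a + 1"
proof (induction a)
  case 0 then show ?case using H3_digit[of 1 0] by simp
next
  case (Suc a)
  have p: "(3::nat)^a \<ge> 1" by simp
  obtain t where t: "(3::nat)^a = t+1" using p by (metis le_add_diff_inverse2)
  have "2*3^Suc a - 1 = 3*(2*3^a - 1) + (2::nat)" using t by simp
  then have "H3 (2*3^Suc a - 1) = 2^2 + H3 (2*3^a - 1)" using H3_digit[of 2 "2*3^a - 1"] by simp
  with Suc show ?case by simp
qed

lemma H3_lower: "H3 x \<ge> 4*a + 1 \<Longrightarrow> x \<ge> 2*3^a - 1"
proof (induction a arbitrary: x)
  case 0 then show ?case using H3_zero by (cases "x = 0") auto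
next
  case (Suc a)
  define q where "q = x div 3"
  define r where "r = x mod 3"
  have x: "x = 3*q + r" and r: "r < 3" unfolding q_def r_def by auto
  have hx: "H3 x = r^2 + H3 q" using x r H3_digit by simp
  have r3: "r = 0 \<or> r = 1 \<or> r = 2" using r by auto
  have "r^2 \<le> 4" using r3 by auto
  then have "H3 q \<ge> 4*a+1" using Suc.prems hx by simp
  then have q: "q \<ge> 2*3^a - 1" using Suc.IH by blast
  have p: "(3::nat)^a \<ge> 1" by simp
  show ?case
  proof (cases "q = 2*3^a - 1")
    case True
    then have "H3 q = 4*a+1" using H3_rep by simp
    then have "r^2 \<ge> 4" using Suc.prems hx by simp
    then have "r = 2" using r3 by auto
    then show ?thesis using x True p by simp
  next
    case False
    then have "q \<ge> 2*3^a" using q by simp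
    then show ?thesis using x by simp
  qed
qed

definition ht :: "nat \<Rightarrow> nat \<Rightarrow> bool" where
  "ht x n \<longleftrightarrow> x \<ge> 1 \<and> happy3 x \<and> eta3 x = n"

lemma ht_0: "ht x 0 \<longleftrightarrow> x = 1"
proof
  assume h: "ht x 0"
  then obtain n where "(H3 ^^ n) x = 1" by (auto simp: ht_def happy3_def)
  then have "(H3 ^^ (LEAST a. (H3 ^^ a) x = 1)) x = 1" by (rule LeastI)
  with h show "x = 1" by (simp add: ht_def eta3_def)
next
  assume "x = 1"
  then show "ht x 0" by (auto simp: ht_def happy3_def eta3_def intro!: exI[of _ 0])
qed

lemma ht_Suc:
  assumes "x \<noteq> 1" "x \<ge> 1"
  shows "ht x (Suc n) \<longleftrightarrow> ht (H3 x) n"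
proof -
  have pos: "H3 x \<ge> 1" using assms H3_zero by (cases "H3 x = 0") auto
  have hap: "(\<exists>n. (H3 ^^ n) x = 1) \<longleftrightarrow> (\<exists>m. (H3 ^^ m) (H3 x) = 1)"
  proof
    assume "\<exists>n. (H3 ^^ n) x = 1"
    then obtain n where n: "(H3 ^^ n) x = 1" by blast
    with assms obtain m where "n = Suc m" by (cases n) auto
    with n show "\<exists>m. (H3 ^^ m) (H3 x) = 1" by (auto simp: funpow_Suc_right simp del: funpow.simps)
  next
    assume "\<exists>m. (H3 ^^ m) (H3 x) = 1"
    then obtain m where "(H3 ^^ m) (H3 x) = 1" by blast
    then have "(H3 ^^ Suc m) x = 1" by (simp add: funpow_Suc_right del: funpow.simps)
    then show "\<exists>n. (H3 ^^ n) x = 1" by blast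
  qed
  show ?thesis
  proof (cases "\<exists>m. (H3 ^^ m) (H3 x) = 1")
    case True
    then obtain m where m: "(H3 ^^ m) (H3 x) = 1" by blast
    then have "(H3 ^^ Suc m) x = 1" by (simp add: funpow_Suc_right del: funpow.simps)
    then have "eta3 x = Suc (LEAST a. (H3 ^^ Suc a) x = 1)"
      unfolding eta3_def by (rule Least_Suc) (use assms in simp)
    also have "\<dots> = Suc (eta3 (H3 x))"
      unfolding eta3_def by (simp add: funpow_Suc_right del: funpow.simps)
    finally show ?thesis using hap True assms pos by (auto simp: ht_def happy3_def)
  next
    case False
    then show ?thesis using hap by (auto simp: ht_def happy3_def)
  qed
qed

lemma ht_one: "ht 1 n \<Longrightarrow> n = 0"
proof -
  assume "ht 1 n"
  moreover have "ht 1 0" using ht_0 by simp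
  ultimately show ?thesis by (simp add: ht_def)
qed

lemma gamma_eq: "ht x n \<Longrightarrow> (\<And>y. y < x \<Longrightarrow> \<not> ht y n) \<Longrightarrow> gamma3 n = x"
proof -
  assume a: "ht x n" "\<And>y. y < x \<Longrightarrow> \<not> ht y n"
  have "gamma3 n = (LEAST x. ht x n)" by (simp add: gamma3_def ht_def)
  also have "\<dots> = x" by (rule Least_equality) (use a in \<open>auto simp: not_le[symmetric]\<close>)
  finally show ?thesis .
qed

lemma ht13: "ht 13 2"
proof -
  have "H3 13 = 3" using H3_digit[of 1 4] H3_digit[of 1 1] H3_digit[of 1 0] by simp
  moreover have "H3 3 = 1" using H3_digit[of 0 1] H3_digit[of 1 0] by simp
  ultimately show "ht 13 2"
    using ht_Suc[of 13 1] ht_Suc[of 3 0] ht_0 by (simp add: numeral_2_eq_2)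
qed

lemma base: "gamma3 2 = 13"
proof (rule gamma_eq)
  show "ht 13 2" by (rule ht13)
next
  fix y :: nat assume y: "y < 13"
  show "\<not> ht y 2"
  proof
    assume h: "ht y 2"
    then have y1: "y \<ge> 1" by (simp add: ht_def)
    have "y \<noteq> 1" using h ht_one by force
    then have h1: "ht (H3 y) 1" using h ht_Suc[of y 1] y1 by (simp add: numeral_2_eq_2)
    have "H3 y \<noteq> 1" using h1 ht_one by force
    moreover have "H3 y \<ge> 1" using h1 by (simp add: ht_def)
    ultimately have "ht (H3 (H3 y)) 0" using h1 ht_Suc[of "H3 y" 0] by simp
    then have "H3 (H3 y) = 1" using ht_0 by simp
    moreover have "H3 (H3 y) \<noteq> 1 \<or> H3 y = 1"
    proof -
      have "y=1 \<or> y=2 \<or> y=3 \<or> y=4 \<or> y=5 \<or> y=6 \<or> y=7 \<or> y=8 \<or> y=9 \<or> y=10 \<or> y=11 \<or> y=12"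
        using y y1 by arith
      then show ?thesis by (elim disjE; simp add: H3.simps)
    qed
    ultimately show False using \<open>H3 y \<noteq> 1\<close> by simp
  qed
qed

fun A :: "nat \<Rightarrow> nat" where
  "A 0 = 3"
| "A (Suc k) = (3^(A k) - 1) div 2"

lemma A_pos: "A k \<ge> 1"
proof (induction k)
  case (Suc k)
  have "(3::nat)^(A k) \<ge> 3^1" using Suc by (intro power_increasing) auto
  then show ?case by simp
qed simp

lemma gamma_A: "gamma3 (k+2) = 4 * A k + 1 \<and> ht (gamma3 (k+2)) (k+2)"
proof (induction k)
  case 0
  have "gamma3 (0+2) = 4 * A 0 + 1" unfolding add_0 base by simp
  moreover have "ht (gamma3 (0+2)) (0+2)" unfolding add_0 base by (rule ht13)
  ultimately show ?case by blast
next
  case (Suc k)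
  define a where "a = A k"
  define g where "g = gamma3 (k+2)"
  have g: "g = 4*a+1" and hg: "ht g (k+2)" using Suc a_def g_def by auto
  have a1: "a \<ge> 1" using A_pos a_def by simp
  have p: "(3::nat)^a \<ge> 3" using a1 by (metis power_one_right power_increasing zero_less_numeral one_le_numeral)
  define x where "x = 2*3^a - (1::nat)"
  have x1: "x \<noteq> 1" "x \<ge> 1" using p x_def by auto
  have Hx: "H3 x = g" using H3_rep g x_def by simp
  have hx: "ht x (Suc k + 2)" using ht_Suc[OF x1] Hx hg by simp
  have min: "\<And>y. y < x \<Longrightarrow> \<not> ht y (Suc k + 2)"
  proof
    fix y assume y: "y < x" and h: "ht y (Suc k + 2)"
    have y1: "y \<ge> 1" using h by (simp add: ht_def)
    have "y \<noteq> 1" using h ht_one by force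
    then have "ht (H3 y) (k+2)" using ht_Suc[of y "k+2"] y1 h by simp
    moreover have "gamma3 (k+2) = (LEAST x. ht x (k+2))" by (simp add: gamma3_def ht_def)
    ultimately have "\<not> H3 y < g" unfolding g_def
      using not_less_Least[of "H3 y" "\<lambda>x. ht x (k+2)"] by auto
    then have "H3 y \<ge> 4*a+1" using g by simp
    then have "y \<ge> x" using H3_lower x_def by blast
    with y show False by simp
  qed
  have gx: "gamma3 (Suc k + 2) = x" by (rule gamma_eq[OF hx min])
  have odd: "odd ((3::nat)^a)" by simp
  then have "(3::nat)^a - 1 = 2 * ((3^a - 1) div 2)" by presburger
  moreover have "A (Suc k) = (3^a - 1) div 2" using a_def by simp
  ultimately have "x = 4 * A (Suc k) + 1" using x_def p by linarith
  then show ?case using gx hx by simp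
qed

lemma tower_A: "tower3 k = real (A k) + 1/2"
proof (induction k)
  case 0 then show ?case by simp
next
  case (Suc k)
  have "tower3 (Suc k) = (3 powr (-1/2) / 2) * 3 powr (real (A k) + 1/2)" using Suc by simp
  also have "\<dots> = 3 powr (real (A k)) / 2"
    by (simp add: powr_add[symmetric])
  also have "\<dots> = 3 ^ (A k) / 2" by (simp add: powr_realpow)
  finally have t: "tower3 (Suc k) = 3 ^ (A k) / 2" .
  have "odd ((3::nat)^A k)" by simp
  then have e: "(3::nat)^A k = 2 * ((3^A k - 1) div 2) + 1" by presburger
  define d where "d = ((3::nat)^A k - 1) div 2"
  have e2: "(3::nat)^A k = 2 * d + 1" using e unfolding d_def .
  have "real ((3::nat)^A k) = real (2 * d + 1)" using e2 by (rule arg_cong)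
  then have f: "(3::real)^A k = 2 * real d + 1" by simp
  have "A (Suc k) = d" by (simp add: d_def)
  moreover have "tower3 (Suc k) = real d + 1/2" using t f by simp
  ultimately show ?case by simp
qed

theorem theorem5p2:
  fixes \<eta> :: nat
  assumes "\<eta> > 2"
  shows "real (gamma3 \<eta>) = 4 * tower3 (\<eta> - 2) - 1"
proof -
  obtain k where k: "\<eta> = k + 2" using assms by (metis add.commute le_Suc_ex less_imp_le)
  show ?thesis using gamma_A[of k] tower_A[of k] k by simp
qed

end
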